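(* Let $\Theta$ and $R$ be finite sets and $s_1:\Theta\to\Delta(R)$. Then $s_1$ is monotone with respect to some pair of total orders $(\succsim_\Theta,\succsim_R)$ if and only if the bipartite graph $G(s_1)$ is acyclic and does not contain a forbidden triple.
   Context: $s_1$ is monotone w.r.t. total orders $(\succsim_\Theta,\succsim_R)$ if for any $\theta\succ\theta'$, $r\in\mathrm{supp}(s_1(\theta))$, $r'\in\mathrm{supp}(s_1(\theta'))$, one has $r\succsim r'$. $G(s_1)$ is the bipartite graph with vertex classes $\Theta$ and $R$ in which $\theta$ and $r$ are joined iff $r\in\mathrm{supp}(s_1(\theta))$. A forbidden triple for $s_1$ is either (1) three distinct $r_1,r_2,r_3\in R$ and four distinct $\theta_1,\dots,\theta_4\in\Theta$ with $r_k\in\mathrm{supp}(s_1(\theta_k))$ for $k=1,2,3$ and $\{r_1,r_2,r_3\}\subset\mathrm{supp}(s_1(\theta_4))$; or (2) three distinct $\theta_1,\theta_2,\theta_3\in\Theta$ and four distinct $r_1,\dots,r_4\in R$ with $\{r_k,r_4\}\subset\mathrm{supp}(s_1(\theta_k))$ for $k=1,2,3$. *)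

theory Defs
  imports "HOL-Probability.Probability_Mass_Function"
begin

text \<open>A total order on a type is a relation le with linear_order_on UNIV le,
 where (x, y) in le means x is below-or-equal y (y \<succsim> x).\<close>

definition monotone_wrt :: "('t \<Rightarrow> 'r pmf) \<Rightarrow> ('t \<times> 't) set \<Rightarrow> ('r \<times> 'r) set \<Rightarrow> bool" where
  "monotone_wrt s1 leT leR \<longleftrightarrow>
     (\<forall>\<theta> \<theta>' r r'. (\<theta>', \<theta>) \<in> leT \<and> \<theta> \<noteq> \<theta>' \<and> r \<in> set_pmf (s1 \<theta>) \<and> r' \<in> set_pmf (s1 \<theta>')
        \<longrightarrow> (r', r) \<in> leR)"

definition G_adj :: "('t \<Rightarrow> 'r pmf) \<Rightarrow> ('t + 'r) \<Rightarrow> ('t + 'r) \<Rightarrow> bool" where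
  "G_adj s1 u v \<longleftrightarrow>
     (\<exists>\<theta> r. r \<in> set_pmf (s1 \<theta>) \<and> ((u = Inl \<theta> \<and> v = Inr r) \<or> (u = Inr r \<and> v = Inl \<theta>)))"

definition is_cycle :: "('a \<Rightarrow> 'a \<Rightarrow> bool) \<Rightarrow> 'a list \<Rightarrow> bool" where
  "is_cycle adj vs \<longleftrightarrow> length vs \<ge> 3 \<and> distinct vs \<and>
     (\<forall>i < length vs. adj (vs ! i) (vs ! ((i + 1) mod length vs)))"

definition G_acyclic :: "('t \<Rightarrow> 'r pmf) \<Rightarrow> bool" where
  "G_acyclic s1 \<longleftrightarrow> \<not> (\<exists>vs. is_cycle (G_adj s1) vs)"

definition has_forbidden_triple :: "('t \<Rightarrow> 'r pmf) \<Rightarrow> bool" where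
  "has_forbidden_triple s1 \<longleftrightarrow>
     (\<exists>r1 r2 r3 \<theta>1 \<theta>2 \<theta>3 \<theta>4.
        distinct [r1, r2, r3] \<and> distinct [\<theta>1, \<theta>2, \<theta>3, \<theta>4] \<and>
        r1 \<in> set_pmf (s1 \<theta>1) \<and> r2 \<in> set_pmf (s1 \<theta>2) \<and> r3 \<in> set_pmf (s1 \<theta>3) \<and>
        {r1, r2, r3} \<subseteq> set_pmf (s1 \<theta>4))
   \<or> (\<exists>\<theta>1 \<theta>2 \<theta>3 r1 r2 r3 r4.
        distinct [\<theta>1, \<theta>2, \<theta>3] \<and> distinct [r1, r2, r3, r4] \<and>
        {r1, r4} \<subseteq> set_pmf (s1 \<theta>1) \<and> {r2, r4} \<subseteq> set_pmf (s1 \<theta>2) \<and>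
        {r3, r4} \<subseteq> set_pmf (s1 \<theta>3))"

end

theory Submission
  imports Defs
begin


lemma lin_facts:
  assumes "linear_order_on UNIV le"
  shows "(x,x) \<in> le" "(x,y) \<in> le \<Longrightarrow> (y,z) \<in> le \<Longrightarrow> (x,z) \<in> le"
    "(x,y) \<in> le \<Longrightarrow> (y,x) \<in> le \<Longrightarrow> x = y" "(x,y) \<in> le \<or> (y,x) \<in> le"
proof -
  have r: "refl_on UNIV le" and t: "trans le" and a: "antisym le" and tot: "total_on UNIV le"
    using assms unfolding linear_order_on_def partial_order_on_def preorder_on_def by auto
  show "(x,x) \<in> le" using r unfolding refl_on_def by blast
  show "(x,y) \<in> le \<Longrightarrow> (y,z) \<in> le \<Longrightarrow> (x,z) \<in> le" using t unfolding trans_on_def by blast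
  show "(x,y) \<in> le \<Longrightarrow> (y,x) \<in> le \<Longrightarrow> x = y" using a unfolding antisym_on_def by blast
  show "(x,y) \<in> le \<or> (y,x) \<in> le" using tot r unfolding total_on_def refl_on_def by (cases "x = y") auto
qed

lemma lin_key:
  fixes f :: "'a \<Rightarrow> 'b::linorder"
  assumes "inj f"
  shows "linear_order_on UNIV {(x,y). f x \<le> f y}"
  unfolding linear_order_on_def partial_order_on_def preorder_on_def
proof (intro conjI)
  show "{(x,y). f x \<le> f y} \<subseteq> UNIV \<times> UNIV" by simp
  show "refl_on UNIV {(x,y). f x \<le> f y}" unfolding refl_on_def by simp
  show "trans {(x,y). f x \<le> f y}" unfolding trans_on_def by (simp, meson order_trans)
  show "antisym {(x,y). f x \<le> f y}" unfolding antisym_on_def using assms by (simp add: injD)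
  show "total_on UNIV {(x,y). f x \<le> f y}" unfolding total_on_def by (simp, meson linear)
qed

lemma exists_max:
  assumes "finite A" "A \<noteq> {}" "linear_order_on UNIV le"
  shows "\<exists>x\<in>A. \<forall>y\<in>A. (y,x) \<in> le"
  using assms(1,2)
proof (induction A rule: finite_ne_induct)
  case (singleton x) then show ?case using lin_facts[OF assms(3)] by auto
next
  case (insert x F)
  then obtain m where m: "m \<in> F" "\<forall>y\<in>F. (y,m) \<in> le" by auto
  note L = lin_facts[OF assms(3)]
  show ?case
  proof (cases "(x,m) \<in> le")
    case True
    have "\<forall>y\<in>insert x F. (y,m) \<in> le" using True m(2) by simp
    then show ?thesis using m(1) by blast
  next
    case False
    then have xm: "(m,x) \<in> le" using L(4) by blast
    have "\<forall>y\<in>insert x F. (y,x) \<in> le"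
    proof
      fix y assume "y \<in> insert x F"
      then show "(y,x) \<in> le"
      proof
        assume "y = x" then show ?thesis using L(1) by simp
      next
        assume "y \<in> F" then have "(y,m) \<in> le" using m(2) by blast
        then show ?thesis using xm L(2) by blast
      qed
    qed
    then show ?thesis by blast
  qed
qed

lemma inj_nat_ex: "\<exists>t::'a::finite \<Rightarrow> nat. inj t"
  using finite_imp_inj_to_nat_seg[of "UNIV::'a set"] by auto

lemma G_adj_simps[simp]:
  "G_adj s1 (Inl a) (Inl b) = False" "G_adj s1 (Inr r) (Inr q) = False"
  "G_adj s1 (Inl a) (Inr r) = (r \<in> set_pmf (s1 a))"
  "G_adj s1 (Inr r) (Inl a) = (r \<in> set_pmf (s1 a))"
  unfolding G_adj_def by auto

lemma G_adj_sym: "G_adj s1 u v = G_adj s1 v u"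
  unfolding G_adj_def by auto

lemma mod_small2: "(x::nat) < 2*n \<Longrightarrow> x mod n = (if x < n then x else x - n)"
  by (auto simp: le_mod_geq)

lemma mono_acyclic:
  fixes s1 :: "'t::finite \<Rightarrow> 'r pmf"
  assumes LT: "linear_order_on UNIV leT" and LR: "linear_order_on UNIV leR"
    and M: "monotone_wrt s1 leT leR"
  shows "G_acyclic s1"
  unfolding G_acyclic_def
proof
  assume "\<exists>vs. is_cycle (G_adj s1) vs"
  then obtain vs where n3: "length vs \<ge> 3" and dist: "distinct vs"
    and adj: "\<And>i. i < length vs \<Longrightarrow> G_adj s1 (vs!i) (vs!((i+1) mod length vs))"
    unfolding is_cycle_def by blast
  define n where "n = length vs"
  have n3': "n \<ge> 3" using n3 n_def by simp
  have adjn: "\<And>i. i<n \<Longrightarrow> G_adj s1 (vs!i) (vs!((i+1) mod n))" using adj n_def by simp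
  define A where "A = {\<theta>. Inl \<theta> \<in> set vs}"
  have "A \<noteq> {}"
  proof (cases "vs!0")
    case (Inl \<theta>)
    then have "Inl \<theta> \<in> set vs" using n3 by (metis nth_mem less_le_trans zero_less_numeral)
    then show ?thesis unfolding A_def by blast
  next
    case (Inr r)
    have "G_adj s1 (vs!0) (vs!1)" using adjn[of 0] n3' by simp
    then obtain \<theta> where "vs!1 = Inl \<theta>" using Inr by (cases "vs!1") auto
    moreover have "vs!1 \<in> set vs" using n3 by simp
    ultimately show ?thesis unfolding A_def by auto
  qed
  moreover have "finite A" by simp
  ultimately obtain \<theta> where th: "\<theta> \<in> A" and mx: "\<forall>y\<in>A. (y,\<theta>) \<in> leT"
    using exists_max[OF _ _ LT] by blast
  then obtain i where i: "i < n" "vs!i = Inl \<theta>" unfolding A_def n_def by (metis in_set_conv_nth mem_Collect_eq)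
  have claim: "\<forall>x\<in>set_pmf (s1 \<theta>). (r,x) \<in> leR"
    if hk: "k < n" "k \<noteq> i" "G_adj s1 (Inr r) (vs!k)" for k r
  proof -
    obtain \<theta>k where k: "vs!k = Inl \<theta>k" "r \<in> set_pmf (s1 \<theta>k)" using hk(3) by (cases "vs!k") auto
    have "\<theta>k \<in> A" using k hk(1) unfolding A_def n_def by (metis mem_Collect_eq nth_mem)
    then have "(\<theta>k,\<theta>) \<in> leT" using mx by blast
    moreover have "\<theta>k \<noteq> \<theta>" using k(1) i hk(1,2) dist unfolding n_def
      by (metis nth_eq_iff_index_eq)
    ultimately show ?thesis using M k(2) unfolding monotone_wrt_def by blast
  qed
  define j1 where "j1 = (i+1) mod n"
  define k1 where "k1 = (i+2) mod n"
  define j2 where "j2 = (i+n-1) mod n"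
  define k2 where "k2 = (i+n-2) mod n"
  have ej1: "j1 = (if i+1 < n then i+1 else i+1-n)" unfolding j1_def using i n3' by (intro mod_small2) auto
  have ek1: "k1 = (if i+2 < n then i+2 else i+2-n)" unfolding k1_def using i n3' by (intro mod_small2) auto
  have ej2: "j2 = (if i+n-1 < n then i+n-1 else i+n-1-n)" unfolding j2_def using i n3' by (intro mod_small2) auto
  have ek2: "k2 = (if i+n-2 < n then i+n-2 else i+n-2-n)" unfolding k2_def using i n3' by (intro mod_small2) auto
  have lt: "j1 < n" "k1 < n" "j2 < n" "k2 < n" using ej1 ek1 ej2 ek2 i n3' by (simp_all split: if_splits; arith)+
  have ne: "k1 \<noteq> i" "k2 \<noteq> i" "j1 \<noteq> j2" using ej1 ek1 ej2 ek2 i n3' by (simp_all split: if_splits; arith)+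
  have a1: "G_adj s1 (vs!i) (vs!j1)" using adjn[OF i(1)] j1_def by simp
  have "(j1 + 1) mod n = k1" unfolding j1_def k1_def by (simp add: mod_simps)
  then have a2: "G_adj s1 (vs!j1) (vs!k1)" using adjn[OF lt(1)] by simp
  have "(j2 + 1) mod n = i" unfolding j2_def using i n3' by (simp add: mod_simps)
  then have a3: "G_adj s1 (vs!j2) (vs!i)" using adjn[OF lt(3)] by simp
  have "(k2 + 1) mod n = j2" unfolding j2_def k2_def using i n3'
    by (simp add: mod_simps Suc_diff_Suc numeral_2_eq_2)
  then have a4: "G_adj s1 (vs!k2) (vs!j2)" using adjn[OF lt(4)] by simp
  obtain ra where ra: "vs!j1 = Inr ra" "ra \<in> set_pmf (s1 \<theta>)" using a1 i(2) by (cases "vs!j1") auto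
  obtain rb where rb: "vs!j2 = Inr rb" "rb \<in> set_pmf (s1 \<theta>)" using a3 i(2) by (cases "vs!j2") auto
  have "(ra, rb) \<in> leR" using claim[OF lt(2) ne(1)] a2 ra rb by auto
  moreover have "(rb, ra) \<in> leR" using claim[OF lt(4) ne(2)] a4 ra rb G_adj_sym by metis
  ultimately have "ra = rb" using lin_facts(3)[OF LR] by blast
  then have "vs!j1 = vs!j2" using ra rb by simp
  then show False using ne(3) lt dist unfolding n_def by (metis nth_eq_iff_index_eq)
qed

lemma mono_no_ft:
  assumes LT: "linear_order_on UNIV leT" and LR: "linear_order_on UNIV leR"
    and M: "monotone_wrt s1 leT leR"
  shows "\<not> has_forbidden_triple s1"
proof -
  note LTf = lin_facts[OF LT] and LRf = lin_facts[OF LR]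
  have end1: "(\<forall>x\<in>set_pmf (s1 b). (r,x) \<in> leR) \<or> (\<forall>x\<in>set_pmf (s1 b). (x,r) \<in> leR)"
    if "a \<noteq> b" "r \<in> set_pmf (s1 a)" "r \<in> set_pmf (s1 b)" for a b r
  proof (cases "(a,b) \<in> leT")
    case True then show ?thesis using M that unfolding monotone_wrt_def by blast
  next
    case False then have "(b,a) \<in> leT" using LTf(4) by blast
    then show ?thesis using M that unfolding monotone_wrt_def by blast
  qed
  have mid: "rb = r4" if "a \<noteq> b" "b \<noteq> c" "(a,b) \<in> leT" "(b,c) \<in> leT" "rb \<in> set_pmf (s1 b)"
    "r4 \<in> set_pmf (s1 a)" "r4 \<in> set_pmf (s1 b)" "r4 \<in> set_pmf (s1 c)" for a b c rb r4
  proof -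
    have "(r4, rb) \<in> leR" using M that unfolding monotone_wrt_def by blast
    moreover have "(rb, r4) \<in> leR" using M that unfolding monotone_wrt_def by blast
    ultimately show ?thesis using LRf(3) by blast
  qed
  show ?thesis unfolding has_forbidden_triple_def
  proof (intro notI, elim disjE exE conjE)
    fix r1 r2 r3 \<theta>1 \<theta>2 \<theta>3 \<theta>4
    assume d1: "distinct [r1, r2, r3]" and d2: "distinct [\<theta>1, \<theta>2, \<theta>3, \<theta>4]"
      and h: "r1 \<in> set_pmf (s1 \<theta>1)" "r2 \<in> set_pmf (s1 \<theta>2)" "r3 \<in> set_pmf (s1 \<theta>3)"
      "{r1, r2, r3} \<subseteq> set_pmf (s1 \<theta>4)"
    have c1: "(\<forall>x\<in>set_pmf (s1 \<theta>4). (r1,x) \<in> leR) \<or> (\<forall>x\<in>set_pmf (s1 \<theta>4). (x,r1) \<in> leR)"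
      using end1[of \<theta>1 \<theta>4 r1] d2 h by auto
    have c2: "(\<forall>x\<in>set_pmf (s1 \<theta>4). (r2,x) \<in> leR) \<or> (\<forall>x\<in>set_pmf (s1 \<theta>4). (x,r2) \<in> leR)"
      using end1[of \<theta>2 \<theta>4 r2] d2 h by auto
    have c3: "(\<forall>x\<in>set_pmf (s1 \<theta>4). (r3,x) \<in> leR) \<or> (\<forall>x\<in>set_pmf (s1 \<theta>4). (x,r3) \<in> leR)"
      using end1[of \<theta>3 \<theta>4 r3] d2 h by auto
    have m: "r1 \<in> set_pmf (s1 \<theta>4)" "r2 \<in> set_pmf (s1 \<theta>4)" "r3 \<in> set_pmf (s1 \<theta>4)" using h by auto
    show False using c1 c2 c3 m d1 LRf(3) by (metis distinct_length_2_or_more)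
  next
    fix \<theta>1 \<theta>2 \<theta>3 r1 r2 r3 r4
    assume d1: "distinct [\<theta>1, \<theta>2, \<theta>3]" and d2: "distinct [r1, r2, r3, r4]"
      and h: "{r1, r4} \<subseteq> set_pmf (s1 \<theta>1)" "{r2, r4} \<subseteq> set_pmf (s1 \<theta>2)" "{r3, r4} \<subseteq> set_pmf (s1 \<theta>3)"
    have t12: "(\<theta>1,\<theta>2) \<in> leT \<or> (\<theta>2,\<theta>1) \<in> leT" and t13: "(\<theta>1,\<theta>3) \<in> leT \<or> (\<theta>3,\<theta>1) \<in> leT"
      and t23: "(\<theta>2,\<theta>3) \<in> leT \<or> (\<theta>3,\<theta>2) \<in> leT" using LTf(4) by blast+
    have ne: "\<theta>1 \<noteq> \<theta>2" "\<theta>1 \<noteq> \<theta>3" "\<theta>2 \<noteq> \<theta>3" "r1 \<noteq> r4" "r2 \<noteq> r4" "r3 \<noteq> r4" using d1 d2 by auto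
    have m: "r1 \<in> set_pmf (s1 \<theta>1)" "r2 \<in> set_pmf (s1 \<theta>2)" "r3 \<in> set_pmf (s1 \<theta>3)"
      "r4 \<in> set_pmf (s1 \<theta>1)" "r4 \<in> set_pmf (s1 \<theta>2)" "r4 \<in> set_pmf (s1 \<theta>3)" using h by auto
    show False using t12 t13 t23
    proof (elim disjE)
    qed (metis mid ne m LTf(2))+
  qed
qed
abbreviation S :: "('t \<Rightarrow> 'r pmf) \<Rightarrow> 't \<Rightarrow> 'r set" where "S s1 \<theta> \<equiv> set_pmf (s1 \<theta>)"

definition UU :: "('t \<Rightarrow> 'r pmf) \<Rightarrow> 't set \<Rightarrow> 'r set" where
  "UU s1 T = (\<Union>\<theta>\<in>T. S s1 \<theta>)"

definition Sep :: "('t \<Rightarrow> 'r pmf) \<Rightarrow> 't set \<Rightarrow> ('r \<Rightarrow> nat) \<Rightarrow> bool" where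
  "Sep s1 T p \<longleftrightarrow> (\<forall>\<theta>\<in>T. \<forall>\<theta>'\<in>T. \<theta> \<noteq> \<theta>' \<longrightarrow>
     (\<forall>a\<in>S s1 \<theta>. \<forall>b\<in>S s1 \<theta>'. p a \<le> p b) \<or> (\<forall>a\<in>S s1 \<theta>. \<forall>b\<in>S s1 \<theta>'. p b \<le> p a))"

definition Itv :: "('t \<Rightarrow> 'r pmf) \<Rightarrow> 't set \<Rightarrow> ('r \<Rightarrow> nat) \<Rightarrow> bool" where
  "Itv s1 T p \<longleftrightarrow> (\<forall>\<theta>\<in>T. \<forall>a\<in>S s1 \<theta>. \<forall>c\<in>S s1 \<theta>. \<forall>b\<in>UU s1 T. p a \<le> p b \<longrightarrow> p b \<le> p c \<longrightarrow> b \<in> S s1 \<theta>)"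

definition Good :: "('t \<Rightarrow> 'r pmf) \<Rightarrow> 't set \<Rightarrow> ('r \<Rightarrow> nat) \<Rightarrow> bool" where
  "Good s1 T p \<longleftrightarrow> inj p \<and> Sep s1 T p \<and> Itv s1 T p"

lemma Good_rev:
  fixes s1 :: "'t \<Rightarrow> 'r::finite pmf"
  assumes "Good s1 T p"
  shows "\<exists>q. Good s1 T q \<and> (\<forall>a b. q a \<le> q b \<longleftrightarrow> p b \<le> p a)"
proof -
  define M where "M = Max (range p)"
  have bd: "\<And>a. p a \<le> M" unfolding M_def by simp
  define q where "q a = M - p a" for a
  have qle: "\<And>a b. q a \<le> q b \<longleftrightarrow> p b \<le> p a" unfolding q_def using bd
    by (meson diff_le_mono2 diff_le_mono2 le_diff_iff' le_trans)
  have "inj q"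
  proof (rule injI)
    fix a b assume "q a = q b"
    then have "p b \<le> p a" "p a \<le> p b" using qle[of a b] qle[of b a] by auto
    then have "p a = p b" by simp
    moreover have "inj p" using assms unfolding Good_def by blast
    ultimately show "a = b" by (simp add: inj_eq)
  qed
  moreover have "Sep s1 T q" using assms unfolding Good_def Sep_def qle by blast
  moreover have "Itv s1 T q" using assms unfolding Good_def Itv_def qle by blast
  ultimately show ?thesis using qle unfolding Good_def by blast
qed

lemma Good_swap:
  assumes G: "Good s1 T p" and xy: "\<forall>\<theta>\<in>T. x \<in> S s1 \<theta> \<longleftrightarrow> y \<in> S s1 \<theta>"
  defines "sw \<equiv> (\<lambda>a. if a = x then y else if a = y then x else a)"
  shows "Good s1 T (\<lambda>a. p (sw a))"
proof -
  have swsw: "\<And>a. sw (sw a) = a" unfolding sw_def by auto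
  have memS: "\<And>\<theta> a. \<theta> \<in> T \<Longrightarrow> sw a \<in> S s1 \<theta> \<longleftrightarrow> a \<in> S s1 \<theta>" unfolding sw_def using xy by auto
  have memU: "\<And>a. sw a \<in> UU s1 T \<longleftrightarrow> a \<in> UU s1 T" unfolding UU_def using memS by blast
  have ip: "inj p" and sp: "Sep s1 T p" and ip2: "Itv s1 T p" using G unfolding Good_def by auto
  have "inj (\<lambda>a. p (sw a))"
  proof (rule injI)
    fix a b assume "p (sw a) = p (sw b)"
    then have "sw a = sw b" using ip by (simp add: injD)
    then show "a = b" using swsw by metis
  qed
  moreover have "Sep s1 T (\<lambda>a. p (sw a))"
    unfolding Sep_def
  proof (intro ballI impI)
    fix \<theta> \<theta>' assume h: "\<theta> \<in> T" "\<theta>' \<in> T" "\<theta> \<noteq> \<theta>'"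
    then have "(\<forall>a\<in>S s1 \<theta>. \<forall>b\<in>S s1 \<theta>'. p a \<le> p b) \<or> (\<forall>a\<in>S s1 \<theta>. \<forall>b\<in>S s1 \<theta>'. p b \<le> p a)"
      using sp unfolding Sep_def by blast
    then show "(\<forall>a\<in>S s1 \<theta>. \<forall>b\<in>S s1 \<theta>'. p (sw a) \<le> p (sw b)) \<or> (\<forall>a\<in>S s1 \<theta>. \<forall>b\<in>S s1 \<theta>'. p (sw b) \<le> p (sw a))"
      using memS h by blast
  qed
  moreover have "Itv s1 T (\<lambda>a. p (sw a))"
    unfolding Itv_def
  proof (intro ballI impI)
    fix \<theta> a c b assume h: "\<theta> \<in> T" "a \<in> S s1 \<theta>" "c \<in> S s1 \<theta>" "b \<in> UU s1 T"
      "p (sw a) \<le> p (sw b)" "p (sw b) \<le> p (sw c)"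
    have "sw b \<in> S s1 \<theta>" using ip2 h memS memU unfolding Itv_def by blast
    then show "b \<in> S s1 \<theta>" using memS h(1) by blast
  qed
  ultimately show ?thesis unfolding Good_def by blast
qed

lemma arith1: "0 < c \<Longrightarrow> c < k \<Longrightarrow> (k*x + c \<le> k*(y::nat)) = (x < y)"
proof
  assume h: "0 < c" "c < k" "k*x + c \<le> k*y"
  show "x < y"
  proof (rule ccontr)
    assume "\<not> x < y" then have "k*y \<le> k*x" by simp
    then show False using h by linarith
  qed
next
  assume h: "0 < c" "c < k" "x < y"
  then have "k * Suc x \<le> k*y" using mult_le_mono2[of "Suc x" y k] by simp
  then show "k*x + c \<le> k*y" using h by simp
qed

lemma arith2: "c < k \<Longrightarrow> (k*x \<le> k*y + c) = (x \<le> (y::nat))"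
proof
  assume h: "c < k" "k*x \<le> k*y + c"
  show "x \<le> y"
  proof (rule ccontr)
    assume "\<not> x \<le> y" then have "k * Suc y \<le> k*x" using mult_le_mono2[of "Suc y" x k] by simp
    then show False using h by simp
  qed
next
  assume "c < k" "x \<le> y" then show "k*x \<le> k*y + c" by (simp add: trans_le_add1)
qed

lemma key_after:
  fixes p :: "'r::finite \<Rightarrow> nat"
  assumes "inj p"
  shows "\<exists>q::'r \<Rightarrow> nat. inj q \<and> (\<forall>a b. q a \<le> q b \<longleftrightarrow>
    ((a \<notin> P \<and> b \<notin> P \<and> p a \<le> p b) \<or> (a \<in> P \<and> b \<notin> P \<and> p r0 < p b) \<or>
     (a \<notin> P \<and> b \<in> P \<and> p a \<le> p r0) \<or> (a \<in> P \<and> b \<in> P \<and> q a \<le> q b)))"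
proof -
  obtain t :: "'r \<Rightarrow> nat" where t: "inj t" using inj_nat_ex by blast
  define N where "N = Max (range t) + 1"
  have tN: "\<And>a. t a < N" unfolding N_def by (simp add: le_imp_less_Suc)
  define k where "k = N + 1"
  define q where "q a = (if a \<in> P then k * p r0 + (t a + 1) else k * p a)" for a
  have ch: "q a \<le> q b \<longleftrightarrow>
    ((a \<notin> P \<and> b \<notin> P \<and> p a \<le> p b) \<or> (a \<in> P \<and> b \<notin> P \<and> p r0 < p b) \<or>
     (a \<notin> P \<and> b \<in> P \<and> p a \<le> p r0) \<or> (a \<in> P \<and> b \<in> P \<and> t a \<le> t b))" for a b
  proof -
    have c1: "t a + 1 < k" "0 < t a + 1" "t b + 1 < k" "0 < k" using tN[of a] tN[of b] k_def by auto
    have e1: "(k * p r0 + (t a + 1) \<le> k * p b) = (p r0 < p b)" using arith1[OF c1(2) c1(1)] by blast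
    have e2: "(k * p a \<le> k * p r0 + (t b + 1)) = (p a \<le> p r0)" using arith2[OF c1(3)] by blast
    have e3: "(k * p a \<le> k * p b) = (p a \<le> p b)" using c1(4) by simp
    show ?thesis
    proof (cases "a \<in> P"; cases "b \<in> P")
    qed (simp_all only: q_def if_True if_False e1 e2 e3 simp_thms add_le_cancel_left; simp)+
  qed
  have "inj q"
  proof (rule injI)
    fix a b assume "q a = q b"
    then have "q a \<le> q b" "q b \<le> q a" by auto
    then show "a = b" unfolding ch using assms t by (auto dest: injD)
  qed
  moreover have "\<forall>a b. q a \<le> q b \<longleftrightarrow> ((a \<notin> P \<and> b \<notin> P \<and> p a \<le> p b) \<or> (a \<in> P \<and> b \<notin> P \<and> p r0 < p b) \<or>
     (a \<notin> P \<and> b \<in> P \<and> p a \<le> p r0) \<or> (a \<in> P \<and> b \<in> P \<and> q a \<le> q b))"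
  proof (intro allI)
    fix a b show "q a \<le> q b \<longleftrightarrow> ((a \<notin> P \<and> b \<notin> P \<and> p a \<le> p b) \<or> (a \<in> P \<and> b \<notin> P \<and> p r0 < p b) \<or>
     (a \<notin> P \<and> b \<in> P \<and> p a \<le> p r0) \<or> (a \<in> P \<and> b \<in> P \<and> q a \<le> q b))" using ch[of a b] by blast
  qed
  ultimately show ?thesis by (intro exI[of _ q] conjI) blast+
qed

lemma key_top:
  fixes p :: "'r::finite \<Rightarrow> nat"
  assumes "inj p"
  shows "\<exists>q::'r \<Rightarrow> nat. inj q \<and> (\<forall>a b. q a \<le> q b \<longleftrightarrow>
    ((a \<notin> P \<and> b \<notin> P \<and> p a \<le> p b) \<or> (a \<notin> P \<and> b \<in> P) \<or> (a \<in> P \<and> b \<in> P \<and> q a \<le> q b)))"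
proof -
  obtain t :: "'r \<Rightarrow> nat" where t: "inj t" using inj_nat_ex by blast
  define M where "M = Max (range p)"
  have bd: "\<And>a. p a \<le> M" unfolding M_def by simp
  define q where "q a = (if a \<in> P then M + 1 + t a else p a)" for a
  have ch: "q a \<le> q b \<longleftrightarrow>
    ((a \<notin> P \<and> b \<notin> P \<and> p a \<le> p b) \<or> (a \<notin> P \<and> b \<in> P) \<or> (a \<in> P \<and> b \<in> P \<and> t a \<le> t b))" for a b
    using bd[of a] bd[of b] unfolding q_def by auto
  have "inj q"
  proof (rule injI)
    fix a b assume "q a = q b"
    then have "q a \<le> q b" "q b \<le> q a" by auto
    then show "a = b" unfolding ch using assms t by (auto dest: injD)
  qed
  moreover have "\<forall>a b. q a \<le> q b \<longleftrightarrow> ((a \<notin> P \<and> b \<notin> P \<and> p a \<le> p b) \<or> (a \<notin> P \<and> b \<in> P) \<or> (a \<in> P \<and> b \<in> P \<and> q a \<le> q b))"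
  proof (intro allI)
    fix a b show "q a \<le> q b \<longleftrightarrow> ((a \<notin> P \<and> b \<notin> P \<and> p a \<le> p b) \<or> (a \<notin> P \<and> b \<in> P) \<or> (a \<in> P \<and> b \<in> P \<and> q a \<le> q b))" using ch[of a b] by blast
  qed
  ultimately show ?thesis by (intro exI[of _ q] conjI) blast+
qed



lemma Good_insert_top:
  fixes s1 :: "'t \<Rightarrow> 'r::finite pmf"
  assumes G: "Good s1 T p" and disj: "S s1 \<theta>0 \<inter> UU s1 T = {}"
  shows "\<exists>q. Good s1 (insert \<theta>0 T) q"
proof -
  have ip: "inj p" and sp: "Sep s1 T p" and it: "Itv s1 T p" using G unfolding Good_def by auto
  define P where "P = S s1 \<theta>0"
  obtain q :: "'r \<Rightarrow> nat" where iq: "inj q" and chA: "\<forall>a b. q a \<le> q b \<longleftrightarrow>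
    ((a \<notin> P \<and> b \<notin> P \<and> p a \<le> p b) \<or> (a \<notin> P \<and> b \<in> P) \<or> (a \<in> P \<and> b \<in> P \<and> q a \<le> q b))"
    using key_top[OF ip, of P] by blast
  note ch = chA[rule_format]
  have notP: "\<And>\<theta> a. \<theta> \<in> T \<Longrightarrow> a \<in> S s1 \<theta> \<Longrightarrow> a \<notin> P" using disj unfolding P_def UU_def by blast
  have "Sep s1 (insert \<theta>0 T) q"
    unfolding Sep_def
  proof (intro ballI impI)
    fix \<theta> \<theta>' assume h: "\<theta> \<in> insert \<theta>0 T" "\<theta>' \<in> insert \<theta>0 T" "\<theta> \<noteq> \<theta>'"
    show "(\<forall>a\<in>S s1 \<theta>. \<forall>b\<in>S s1 \<theta>'. q a \<le> q b) \<or> (\<forall>a\<in>S s1 \<theta>. \<forall>b\<in>S s1 \<theta>'. q b \<le> q a)"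
    proof (cases "\<theta> = \<theta>0")
      case True
      then have "\<theta>' \<in> T" using h by auto
      then have "\<forall>a\<in>S s1 \<theta>. \<forall>b\<in>S s1 \<theta>'. q b \<le> q a" using True notP ch unfolding P_def by blast
      then show ?thesis by blast
    next
      case False
      then have t: "\<theta> \<in> T" using h by auto
      show ?thesis
      proof (cases "\<theta>' = \<theta>0")
        case True
        then have "\<forall>a\<in>S s1 \<theta>. \<forall>b\<in>S s1 \<theta>'. q a \<le> q b" using t notP ch unfolding P_def by blast
        then show ?thesis by blast
      next
        case False
        then have t': "\<theta>' \<in> T" using h by auto
        have eq: "\<And>a b. a \<in> S s1 \<theta> \<Longrightarrow> b \<in> S s1 \<theta>' \<Longrightarrow> (q a \<le> q b \<longleftrightarrow> p a \<le> p b) \<and> (q b \<le> q a \<longleftrightarrow> p b \<le> p a)"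
          using ch notP t t' by blast
        have "(\<forall>a\<in>S s1 \<theta>. \<forall>b\<in>S s1 \<theta>'. p a \<le> p b) \<or> (\<forall>a\<in>S s1 \<theta>. \<forall>b\<in>S s1 \<theta>'. p b \<le> p a)"
          using sp t t' h(3) unfolding Sep_def by blast
        then show ?thesis using eq by blast
      qed
    qed
  qed
  moreover have "Itv s1 (insert \<theta>0 T) q"
    unfolding Itv_def
  proof (intro ballI impI)
    fix \<theta> a c b assume h: "\<theta> \<in> insert \<theta>0 T" "a \<in> S s1 \<theta>" "c \<in> S s1 \<theta>" "b \<in> UU s1 (insert \<theta>0 T)"
      "q a \<le> q b" "q b \<le> q c"
    show "b \<in> S s1 \<theta>"
    proof (cases "\<theta> = \<theta>0")
      case True
      then have "a \<in> P" using h unfolding P_def by simp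
      then have "b \<in> P" using h(5) ch[of a b] by blast
      then show ?thesis using True unfolding P_def by simp
    next
      case False
      then have t: "\<theta> \<in> T" using h by auto
      have an: "a \<notin> P" "c \<notin> P" using notP t h by auto
      have bn: "b \<notin> P" using h(6) ch[of b c] an by blast
      then have bU: "b \<in> UU s1 T" using h(4) unfolding UU_def P_def by auto
      have "p a \<le> p b" "p b \<le> p c" using h(5,6) ch[of a b] ch[of b c] an bn by auto
      then show ?thesis using it t h(2,3) bU unfolding Itv_def by blast
    qed
  qed
  ultimately show ?thesis using iq unfolding Good_def by blast
qed



lemma Good_insert_after:
  fixes s1 :: "'t \<Rightarrow> 'r::finite pmf"
  assumes G: "Good s1 T p" and r0: "r0 \<in> S s1 \<theta>0" "r0 \<in> UU s1 T"
    and disj: "(S s1 \<theta>0 - {r0}) \<inter> UU s1 T = {}"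
    and star: "\<forall>\<theta>\<in>T. r0 \<in> S s1 \<theta> \<longrightarrow> (\<forall>a\<in>S s1 \<theta>. p a \<le> p r0) \<or> (S s1 \<theta>0 \<subseteq> {r0} \<and> (\<forall>a\<in>S s1 \<theta>. p r0 \<le> p a))"
  shows "\<exists>q. Good s1 (insert \<theta>0 T) q"
proof -
  have ip: "inj p" and sp: "Sep s1 T p" and it: "Itv s1 T p" using G unfolding Good_def by auto
  define P where "P = S s1 \<theta>0 - {r0}"
  obtain q :: "'r \<Rightarrow> nat" where iq: "inj q" and chA: "\<forall>a b. q a \<le> q b \<longleftrightarrow>
    ((a \<notin> P \<and> b \<notin> P \<and> p a \<le> p b) \<or> (a \<in> P \<and> b \<notin> P \<and> p r0 < p b) \<or>
     (a \<notin> P \<and> b \<in> P \<and> p a \<le> p r0) \<or> (a \<in> P \<and> b \<in> P \<and> q a \<le> q b))"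
    using key_after[OF ip, of P r0] by blast
  note ch = chA[rule_format]
  have notP: "\<And>\<theta> a. \<theta> \<in> T \<Longrightarrow> a \<in> S s1 \<theta> \<Longrightarrow> a \<notin> P" using disj unfolding P_def UU_def by blast
  have r0P: "r0 \<notin> P" unfolding P_def by simp
  have S0: "\<And>a. a \<in> S s1 \<theta>0 \<longleftrightarrow> a = r0 \<or> a \<in> P" unfolding P_def using r0 by auto
  have K: "(\<forall>a\<in>S s1 \<theta>0. \<forall>b\<in>S s1 \<theta>. q a \<le> q b) \<or> (\<forall>a\<in>S s1 \<theta>0. \<forall>b\<in>S s1 \<theta>. q b \<le> q a)"
    if t: "\<theta> \<in> T" for \<theta>
  proof (cases "r0 \<in> S s1 \<theta>")
    case True
    then have "(\<forall>a\<in>S s1 \<theta>. p a \<le> p r0) \<or> (S s1 \<theta>0 \<subseteq> {r0} \<and> (\<forall>a\<in>S s1 \<theta>. p r0 \<le> p a))"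
      using star t by blast
    then show ?thesis
    proof
      assume h: "\<forall>a\<in>S s1 \<theta>. p a \<le> p r0"
      have "\<forall>a\<in>S s1 \<theta>0. \<forall>b\<in>S s1 \<theta>. q b \<le> q a"
      proof (intro ballI)
        fix a b assume ab: "a \<in> S s1 \<theta>0" "b \<in> S s1 \<theta>"
        have bP: "b \<notin> P" using notP t ab by blast
        show "q b \<le> q a" using ab(1) S0 ch[of b a] bP r0P h ab(2) by auto
      qed
      then show ?thesis by blast
    next
      assume h: "S s1 \<theta>0 \<subseteq> {r0} \<and> (\<forall>a\<in>S s1 \<theta>. p r0 \<le> p a)"
      have "\<forall>a\<in>S s1 \<theta>0. \<forall>b\<in>S s1 \<theta>. q a \<le> q b"
      proof (intro ballI)
        fix a b assume ab: "a \<in> S s1 \<theta>0" "b \<in> S s1 \<theta>"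
        have bP: "b \<notin> P" using notP t ab by blast
        have "a = r0" using h ab by auto
        then show "q a \<le> q b" using ch[of a b] bP r0P h ab(2) by auto
      qed
      then show ?thesis by blast
    qed
  next
    case False
    have "(\<forall>b\<in>S s1 \<theta>. p r0 < p b) \<or> (\<forall>b\<in>S s1 \<theta>. p b < p r0)"
    proof (rule ccontr)
      assume "\<not> ?thesis"
      then obtain a c where ac: "a \<in> S s1 \<theta>" "c \<in> S s1 \<theta>" "p a \<le> p r0" "p r0 \<le> p c"
        by (meson not_le)
      then have "r0 \<in> S s1 \<theta>" using it t r0(2) unfolding Itv_def by blast
      then show False using False by blast
    qed
    then show ?thesis
    proof
      assume h: "\<forall>b\<in>S s1 \<theta>. p r0 < p b"
      have "\<forall>a\<in>S s1 \<theta>0. \<forall>b\<in>S s1 \<theta>. q a \<le> q b"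
      proof (intro ballI)
        fix a b assume ab: "a \<in> S s1 \<theta>0" "b \<in> S s1 \<theta>"
        have bP: "b \<notin> P" using notP t ab by blast
        show "q a \<le> q b" using ab(1) S0 ch[of a b] bP r0P h ab(2) by auto
      qed
      then show ?thesis by blast
    next
      assume h: "\<forall>b\<in>S s1 \<theta>. p b < p r0"
      have "\<forall>a\<in>S s1 \<theta>0. \<forall>b\<in>S s1 \<theta>. q b \<le> q a"
      proof (intro ballI)
        fix a b assume ab: "a \<in> S s1 \<theta>0" "b \<in> S s1 \<theta>"
        have bP: "b \<notin> P" using notP t ab by blast
        have "p b < p r0" using h ab(2) by blast
        then show "q b \<le> q a" using ab(1) S0 ch[of b a] bP r0P by auto
      qed
      then show ?thesis by blast
    qed
  qed
  have "Sep s1 (insert \<theta>0 T) q"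
    unfolding Sep_def
  proof (intro ballI impI)
    fix \<theta> \<theta>' assume h: "\<theta> \<in> insert \<theta>0 T" "\<theta>' \<in> insert \<theta>0 T" "\<theta> \<noteq> \<theta>'"
    show "(\<forall>a\<in>S s1 \<theta>. \<forall>b\<in>S s1 \<theta>'. q a \<le> q b) \<or> (\<forall>a\<in>S s1 \<theta>. \<forall>b\<in>S s1 \<theta>'. q b \<le> q a)"
    proof (cases "\<theta> = \<theta>0")
      case True
      then have "\<theta>' \<in> T" using h by auto
      then show ?thesis using K True by blast
    next
      case False
      then have t: "\<theta> \<in> T" using h by auto
      show ?thesis
      proof (cases "\<theta>' = \<theta>0")
        case True
        then show ?thesis using K[OF t] by blast
      next
        case False
        then have t': "\<theta>' \<in> T" using h by auto
        have eq: "\<And>a b. a \<in> S s1 \<theta> \<Longrightarrow> b \<in> S s1 \<theta>' \<Longrightarrow> (q a \<le> q b \<longleftrightarrow> p a \<le> p b) \<and> (q b \<le> q a \<longleftrightarrow> p b \<le> p a)"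
          using ch notP t t' by blast
        have "(\<forall>a\<in>S s1 \<theta>. \<forall>b\<in>S s1 \<theta>'. p a \<le> p b) \<or> (\<forall>a\<in>S s1 \<theta>. \<forall>b\<in>S s1 \<theta>'. p b \<le> p a)"
          using sp t t' h(3) unfolding Sep_def by blast
        then show ?thesis using eq by blast
      qed
    qed
  qed
  moreover have "Itv s1 (insert \<theta>0 T) q"
    unfolding Itv_def
  proof (intro ballI impI)
    fix \<theta> a c b assume h: "\<theta> \<in> insert \<theta>0 T" "a \<in> S s1 \<theta>" "c \<in> S s1 \<theta>" "b \<in> UU s1 (insert \<theta>0 T)"
      "q a \<le> q b" "q b \<le> q c"
    show "b \<in> S s1 \<theta>"
    proof (cases "\<theta> = \<theta>0")
      case True
      show ?thesis
      proof (rule ccontr)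
        assume nb: "b \<notin> S s1 \<theta>"
        then have bP: "b \<notin> P" "b \<noteq> r0" using S0 True by auto
        have "p r0 \<le> p b"
        proof (cases "a = r0")
          case True then show ?thesis using h(5) ch[of a b] bP r0P by auto
        next
          case False then have "a \<in> P" using S0 h(2) \<open>\<theta> = \<theta>0\<close> by auto
          then show ?thesis using h(5) ch[of a b] bP by auto
        qed
        moreover have "p b \<le> p r0"
        proof (cases "c = r0")
          case True then show ?thesis using h(6) ch[of b c] bP r0P by auto
        next
          case False then have "c \<in> P" using S0 h(3) \<open>\<theta> = \<theta>0\<close> by auto
          then show ?thesis using h(6) ch[of b c] bP by auto
        qed
        ultimately have "p b = p r0" by simp
        then have "b = r0" using ip by (simp add: inj_eq)
        then show False using bP by simp
      qed
    next
      case False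
      then have t: "\<theta> \<in> T" using h by auto
      have an: "a \<notin> P" "c \<notin> P" using notP t h by auto
      show ?thesis
      proof (cases "b \<in> P")
        case True
        have "p a \<le> p r0" "p r0 < p c" using h(5,6) ch[of a b] ch[of b c] an True by auto
        then have "r0 \<in> S s1 \<theta>" using it t h(2,3) r0(2) unfolding Itv_def by (meson less_imp_le)
        then have "(\<forall>x\<in>S s1 \<theta>. p x \<le> p r0) \<or> S s1 \<theta>0 \<subseteq> {r0}" using star t by blast
        moreover have "\<not> S s1 \<theta>0 \<subseteq> {r0}" using True unfolding P_def by auto
        ultimately show ?thesis using \<open>p r0 < p c\<close> h(3) by auto
      next
        case False
        then have bU: "b \<in> UU s1 T" using h(4) r0(2) S0 unfolding UU_def by auto
        have "p a \<le> p b" "p b \<le> p c" using h(5,6) ch[of a b] ch[of b c] an False by auto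
        then show ?thesis using it t h(2,3) bU unfolding Itv_def by blast
      qed
    qed
  qed
  ultimately show ?thesis using iq unfolding Good_def by blast
qed



lemma prep1:
  fixes s1 :: "'t \<Rightarrow> 'r::finite pmf"
  assumes G: "Good s1 T p" and th0: "\<theta>0 \<notin> T" and r0: "r0 \<in> S s1 \<theta>0"
    and nft: "\<not> has_forbidden_triple s1"
  shows "\<exists>p1. Good s1 T p1 \<and> (\<forall>\<theta>\<in>T. r0 \<in> S s1 \<theta> \<longrightarrow>
            (\<forall>a\<in>S s1 \<theta>. p1 a \<le> p1 r0) \<or> (\<forall>a\<in>S s1 \<theta>. p1 r0 \<le> p1 a))"
proof (cases "\<forall>\<theta>\<in>T. r0 \<in> S s1 \<theta> \<longrightarrow> (\<forall>a\<in>S s1 \<theta>. p a \<le> p r0) \<or> (\<forall>a\<in>S s1 \<theta>. p r0 \<le> p a)")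
  case True
  then show ?thesis using G by blast
next
  case False
  have ip: "inj p" and sp: "Sep s1 T p" and it: "Itv s1 T p" using G unfolding Good_def by auto
  from False obtain \<theta>1 a1 c1 where t1: "\<theta>1 \<in> T" "r0 \<in> S s1 \<theta>1" and ac1: "a1 \<in> S s1 \<theta>1" "c1 \<in> S s1 \<theta>1"
    "p a1 < p r0" "p r0 < p c1"
    by (meson not_le)
  have uniq: "\<theta> = \<theta>1" if "\<theta> \<in> T" "r0 \<in> S s1 \<theta>" for \<theta>
  proof (rule ccontr)
    assume ne: "\<theta> \<noteq> \<theta>1"
    then have "(\<forall>a\<in>S s1 \<theta>1. \<forall>b\<in>S s1 \<theta>. p a \<le> p b) \<or> (\<forall>a\<in>S s1 \<theta>1. \<forall>b\<in>S s1 \<theta>. p b \<le> p a)"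
      using sp t1 that unfolding Sep_def by metis
    then show False using ac1 that(2) by (meson not_le)
  qed
  have fin: "finite (p ` S s1 \<theta>1)" "p ` S s1 \<theta>1 \<noteq> {}" using t1 by auto
  obtain m where m: "m \<in> S s1 \<theta>1" "p m = Max (p ` S s1 \<theta>1)" using Max_in[OF fin] by auto
  obtain n where n: "n \<in> S s1 \<theta>1" "p n = Min (p ` S s1 \<theta>1)" using Min_in[OF fin] by auto
  have mx: "\<And>a. a \<in> S s1 \<theta>1 \<Longrightarrow> p a \<le> p m" using m fin by simp
  have mn: "\<And>a. a \<in> S s1 \<theta>1 \<Longrightarrow> p n \<le> p a" using n fin by simp
  have nrm: "p n < p r0" "p r0 < p m" using mx[OF ac1(2)] mn[OF ac1(1)] ac1 by auto
  show ?thesis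
  proof (cases "\<forall>\<theta>\<in>T. m \<in> S s1 \<theta> \<longrightarrow> \<theta> = \<theta>1")
    case True
    define sw where "sw = (\<lambda>a. if a = r0 then m else if a = m then r0 else a)"
    have "Good s1 T (\<lambda>a. p (sw a))" unfolding sw_def
      by (rule Good_swap[OF G]) (use True uniq t1 m in blast)
    moreover have "\<forall>a\<in>S s1 \<theta>1. p (sw a) \<le> p (sw r0)"
    proof
      fix a assume "a \<in> S s1 \<theta>1"
      then have "sw a \<in> S s1 \<theta>1" unfolding sw_def using m t1 by auto
      then show "p (sw a) \<le> p (sw r0)" using mx unfolding sw_def by simp
    qed
    ultimately show ?thesis using uniq by (intro exI[of _ "\<lambda>a. p (sw a)"]) blast
  next
    case False
    then obtain \<theta>m where hm: "\<theta>m \<in> T" "m \<in> S s1 \<theta>m" "\<theta>m \<noteq> \<theta>1" by blast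
    show ?thesis
    proof (cases "\<forall>\<theta>\<in>T. n \<in> S s1 \<theta> \<longrightarrow> \<theta> = \<theta>1")
      case True
      define sw where "sw = (\<lambda>a. if a = r0 then n else if a = n then r0 else a)"
      have "Good s1 T (\<lambda>a. p (sw a))" unfolding sw_def
        by (rule Good_swap[OF G]) (use True uniq t1 n in blast)
      moreover have "\<forall>a\<in>S s1 \<theta>1. p (sw r0) \<le> p (sw a)"
      proof
        fix a assume "a \<in> S s1 \<theta>1"
        then have "sw a \<in> S s1 \<theta>1" unfolding sw_def using n t1 by auto
        then show "p (sw r0) \<le> p (sw a)" using mn unfolding sw_def by simp
      qed
      ultimately show ?thesis using uniq by (intro exI[of _ "\<lambda>a. p (sw a)"]) blast
    next
      case False
      then obtain \<theta>n where thn: "\<theta>n \<in> T" "n \<in> S s1 \<theta>n" "\<theta>n \<noteq> \<theta>1" by blast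
      have "\<theta>n \<noteq> \<theta>m"
      proof
        assume eq: "\<theta>n = \<theta>m"
        have "(\<forall>a\<in>S s1 \<theta>1. \<forall>b\<in>S s1 \<theta>m. p a \<le> p b) \<or> (\<forall>a\<in>S s1 \<theta>1. \<forall>b\<in>S s1 \<theta>m. p b \<le> p a)"
          using sp t1 hm unfolding Sep_def by metis
        then have "p m \<le> p n" using m(1) n(1) hm(2) thn(2) eq by blast
        then show False using nrm by simp
      qed
      moreover have "\<theta>0 \<noteq> \<theta>n" "\<theta>0 \<noteq> \<theta>m" "\<theta>0 \<noteq> \<theta>1" using th0 thn hm t1 by auto
      moreover have "n \<noteq> r0" "r0 \<noteq> m" "n \<noteq> m" using nrm by auto
      ultimately have "has_forbidden_triple s1" unfolding has_forbidden_triple_def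
        apply (rule_tac disjI1)
        apply (rule_tac x=n in exI, rule_tac x=r0 in exI, rule_tac x=m in exI)
        apply (rule_tac x=\<theta>n in exI, rule_tac x=\<theta>0 in exI, rule_tac x=\<theta>m in exI, rule_tac x=\<theta>1 in exI)
        using thn hm t1 r0 m n by auto
      then show ?thesis using nft by blast
    qed
  qed
qed

lemma prep2:
  fixes s1 :: "'t \<Rightarrow> 'r::finite pmf"
  assumes G: "Good s1 T p" and th0: "\<theta>0 \<notin> T" and r0: "r0 \<in> S s1 \<theta>0"
    and x: "x \<in> S s1 \<theta>0" "x \<noteq> r0" "x \<notin> UU s1 T"
    and ep: "\<forall>\<theta>\<in>T. r0 \<in> S s1 \<theta> \<longrightarrow> (\<forall>a\<in>S s1 \<theta>. p a \<le> p r0) \<or> (\<forall>a\<in>S s1 \<theta>. p r0 \<le> p a)"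
    and nft: "\<not> has_forbidden_triple s1"
  shows "\<exists>p2. Good s1 T p2 \<and> (\<forall>\<theta>\<in>T. r0 \<in> S s1 \<theta> \<longrightarrow> (\<forall>a\<in>S s1 \<theta>. p2 a \<le> p2 r0))"
proof (cases "\<exists>\<theta>1\<in>T. r0 \<in> S s1 \<theta>1 \<and> (\<exists>b\<in>S s1 \<theta>1. b \<noteq> r0)")
  case False
  then have "\<forall>\<theta>\<in>T. r0 \<in> S s1 \<theta> \<longrightarrow> (\<forall>a\<in>S s1 \<theta>. p a \<le> p r0)" by fastforce
  then show ?thesis using G by blast
next
  case True
  have ip: "inj p" and sp: "Sep s1 T p" using G unfolding Good_def by auto
  then obtain \<theta>1 b1 where t1: "\<theta>1 \<in> T" "r0 \<in> S s1 \<theta>1" "b1 \<in> S s1 \<theta>1" "b1 \<noteq> r0" using True by blast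
  have uniq: "\<theta> = \<theta>1" if "\<theta> \<in> T" "r0 \<in> S s1 \<theta>" "b \<in> S s1 \<theta>" "b \<noteq> r0" for \<theta> b
  proof (rule ccontr)
    assume ne: "\<theta> \<noteq> \<theta>1"
    then have "(\<forall>a\<in>S s1 \<theta>1. \<forall>c\<in>S s1 \<theta>. p a \<le> p c) \<or> (\<forall>a\<in>S s1 \<theta>1. \<forall>c\<in>S s1 \<theta>. p c \<le> p a)"
      using sp t1 that unfolding Sep_def by metis
    then have "p b1 \<noteq> p b \<or> b1 = r0"
      using t1 that by (metis antisym inj_eq ip)
    then have b1b: "b1 \<noteq> b" using t1 by auto
    have xU: "x \<noteq> b1" "x \<noteq> b" using x t1 that unfolding UU_def by auto
    have "has_forbidden_triple s1" unfolding has_forbidden_triple_def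
      apply (rule_tac disjI2)
      apply (rule_tac x=\<theta>1 in exI, rule_tac x=\<theta> in exI, rule_tac x=\<theta>0 in exI)
      apply (rule_tac x=b1 in exI, rule_tac x=b in exI, rule_tac x=x in exI, rule_tac x=r0 in exI)
      using t1 that th0 ne b1b xU x r0 by auto
    then show False using nft by blast
  qed
  have all: "\<forall>\<theta>\<in>T. r0 \<in> S s1 \<theta> \<longrightarrow> (\<forall>a\<in>S s1 \<theta>. q a \<le> q r0)"
    if q1: "\<forall>a\<in>S s1 \<theta>1. q a \<le> q r0" for q :: "'r \<Rightarrow> nat"
  proof (intro ballI impI)
    fix \<theta> a assume h: "\<theta> \<in> T" "r0 \<in> S s1 \<theta>" "a \<in> S s1 \<theta>"
    show "q a \<le> q r0"
    proof (cases "a = r0")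
      case False
      then have "\<theta> = \<theta>1" using uniq h by blast
      then show ?thesis using q1 h by blast
    qed simp
  qed
  from ep t1 have "(\<forall>a\<in>S s1 \<theta>1. p a \<le> p r0) \<or> (\<forall>a\<in>S s1 \<theta>1. p r0 \<le> p a)" by blast
  then show ?thesis
  proof
    assume "\<forall>a\<in>S s1 \<theta>1. p a \<le> p r0"
    then show ?thesis using all G by blast
  next
    assume h: "\<forall>a\<in>S s1 \<theta>1. p r0 \<le> p a"
    obtain q where q: "Good s1 T q" "\<forall>a b. q a \<le> q b \<longleftrightarrow> p b \<le> p a" using Good_rev[OF G] by blast
    have "\<forall>a\<in>S s1 \<theta>1. q a \<le> q r0" using h q(2) by blast
    then show ?thesis using all q(1) by blast
  qed
qed



lemma leaf:
  fixes s1 :: "'t::finite \<Rightarrow> 'r::finite pmf"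
  assumes acyc: "G_acyclic s1" and T: "T \<noteq> {}"
  shows "\<exists>\<theta>0\<in>T. \<forall>a\<in>S s1 \<theta>0. \<forall>b\<in>S s1 \<theta>0. a \<in> UU s1 (T-{\<theta>0}) \<longrightarrow> b \<in> UU s1 (T-{\<theta>0}) \<longrightarrow> a = b"
proof -
  define PP where "PP vs \<longleftrightarrow> distinct vs \<and> (\<exists>\<theta>\<in>T. vs \<noteq> [] \<and> hd vs = Inl \<theta>) \<and>
      (\<forall>i. Suc i < length vs \<longrightarrow> G_adj s1 (vs!i) (vs!Suc i))" for vs :: "('t + 'r) list"
  obtain \<theta>a where "\<theta>a \<in> T" using T by blast
  then have P1: "PP [Inl \<theta>a]" unfolding PP_def by auto
  have bd: "\<forall>vs. PP vs \<longrightarrow> length vs < CARD('t + 'r) + 1"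
  proof (intro allI impI)
    fix vs assume "PP vs"
    then have "distinct vs" unfolding PP_def by blast
    then have "length vs = card (set vs)" by (simp add: distinct_card)
    also have "\<dots> \<le> CARD('t + 'r)" by (rule card_mono) auto
    finally show "length vs < CARD('t + 'r) + 1" by simp
  qed
  obtain vs where pv: "PP vs" and maxl: "\<And>ws. PP ws \<Longrightarrow> length ws \<le> length vs"
    using Lattices_Big.ex_has_greatest_nat[of PP "[Inl \<theta>a]" length, OF P1 bd] by blast
  from pv obtain \<theta>0 where t0: "\<theta>0 \<in> T" "vs \<noteq> []" "hd vs = Inl \<theta>0" and dv: "distinct vs"
    and av: "\<And>i. Suc i < length vs \<Longrightarrow> G_adj s1 (vs!i) (vs!Suc i)" unfolding PP_def by blast
  have v0: "vs!0 = Inl \<theta>0" using t0 by (simp add: hd_conv_nth)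
  have lv: "0 < length vs" using t0 by simp
  show ?thesis
  proof (rule bexI[OF _ t0(1)], intro ballI impI, rule ccontr)
    fix a b assume ab: "a \<in> S s1 \<theta>0" "b \<in> S s1 \<theta>0" "a \<in> UU s1 (T-{\<theta>0})" "b \<in> UU s1 (T-{\<theta>0})" "a \<noteq> b"
    obtain r' \<theta>' where rt: "r' \<in> S s1 \<theta>0" "r' \<in> S s1 \<theta>'" "\<theta>' \<in> T" "\<theta>' \<noteq> \<theta>0"
      and n1: "\<not> (Suc 0 < length vs \<and> vs!1 = Inr r')"
    proof (cases "Suc 0 < length vs \<and> vs!1 = Inr a")
      case True
      then show ?thesis using that ab unfolding UU_def by auto
    next
      case False
      then show ?thesis using that ab unfolding UU_def by auto
    qed
    show False
    proof (cases "Inr r' \<in> set vs")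
      case True
      then obtain j where j: "j < length vs" "vs!j = Inr r'" by (meson in_set_conv_nth)
      have j2: "j \<ge> 2" using j v0 n1 by (cases j; cases "j - 1"; auto)
      define cyc where "cyc = take (Suc j) vs"
      have lc: "length cyc = Suc j" unfolding cyc_def using j by simp
      have "is_cycle (G_adj s1) cyc" unfolding is_cycle_def
      proof (intro conjI allI impI)
        show "3 \<le> length cyc" using lc j2 by simp
        show "distinct cyc" unfolding cyc_def using dv by simp
        fix i assume i: "i < length cyc"
        show "G_adj s1 (cyc!i) (cyc!((i+1) mod length cyc))"
        proof (cases "i < j")
          case True
          then have "(i+1) mod length cyc = Suc i" using lc by simp
          then show ?thesis unfolding cyc_def using True av[of i] j by simp
        next
          case False
          then have "i = j" using i lc by simp
          then show ?thesis unfolding cyc_def using lc j v0 rt by simp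
        qed
      qed
      then show False using acyc unfolding G_acyclic_def by blast
    next
      case nr: False
      show False
      proof (cases "Inl \<theta>' \<in> set vs")
        case True
        then obtain k where k: "k < length vs" "vs!k = Inl \<theta>'" by (meson in_set_conv_nth)
        have k1: "k \<ge> 1" using k v0 rt(4) by (cases k) auto
        define cyc where "cyc = take (Suc k) vs @ [Inr r']"
        have lc: "length cyc = Suc (Suc k)" unfolding cyc_def using k by simp
        have "is_cycle (G_adj s1) cyc" unfolding is_cycle_def
        proof (intro conjI allI impI)
          show "3 \<le> length cyc" using lc k1 by simp
          show "distinct cyc" unfolding cyc_def using dv nr by (auto dest: in_set_takeD)
          fix i assume i: "i < length cyc"
          show "G_adj s1 (cyc!i) (cyc!((i+1) mod length cyc))"
          proof (cases "i < k")
            case True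
            then have "(i+1) mod length cyc = Suc i" using lc by simp
            then show ?thesis unfolding cyc_def using True av[of i] k by (simp add: nth_append)
          next
            case False
            then have "i = k \<or> i = Suc k" using i lc by auto
            then show ?thesis
            proof
              assume "i = k"
              then show ?thesis unfolding cyc_def using lc k rt by (simp add: nth_append)
            next
              assume "i = Suc k"
              then show ?thesis unfolding cyc_def using lc k rt v0 by (simp add: nth_append)
            qed
          qed
        qed
        then show False using acyc unfolding G_acyclic_def by blast
      next
        case False
        define ws where "ws = Inl \<theta>' # Inr r' # vs"
        have "PP ws" unfolding PP_def
        proof (intro conjI allI impI)
          show "distinct ws" unfolding ws_def using dv nr False by simp
          show "\<exists>\<theta>\<in>T. ws \<noteq> [] \<and> hd ws = Inl \<theta>" unfolding ws_def using rt by simp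
          fix i assume i: "Suc i < length ws"
          show "G_adj s1 (ws!i) (ws!Suc i)"
          proof (cases i)
            case 0 then show ?thesis unfolding ws_def using rt by simp
          next
            case (Suc i')
            show ?thesis
            proof (cases i')
              case 0 then show ?thesis unfolding ws_def using rt v0 Suc by simp
            next
              case (Suc i'')
              then show ?thesis unfolding ws_def using \<open>i = Suc i'\<close> av[of i''] i ws_def by simp
            qed
          qed
        qed
        then have "length ws \<le> length vs" by (rule maxl)
        then show False unfolding ws_def by simp
      qed
    qed
  qed
qed



lemma build:
  fixes s1 :: "'t::finite \<Rightarrow> 'r::finite pmf"
  assumes acyc: "G_acyclic s1" and nft: "\<not> has_forbidden_triple s1"
  shows "\<exists>p. Good s1 T p"
proof -
  have "finite T" by simp
  then show ?thesis
  proof (induction T rule: finite_remove_induct)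
    case empty
    obtain t :: "'r \<Rightarrow> nat" where "inj t" using inj_nat_ex by blast
    then have "Good s1 {} t" unfolding Good_def Sep_def Itv_def by simp
    then show ?case by blast
  next
    case (remove A)
    obtain \<theta>0 where t0: "\<theta>0 \<in> A" and lf: "\<forall>a\<in>S s1 \<theta>0. \<forall>b\<in>S s1 \<theta>0. a \<in> UU s1 (A-{\<theta>0}) \<longrightarrow> b \<in> UU s1 (A-{\<theta>0}) \<longrightarrow> a = b"
      using leaf[OF acyc remove.hyps(2)] by blast
    define T' where "T' = A - {\<theta>0}"
    obtain p where G: "Good s1 T' p" using remove.IH[OF t0] unfolding T'_def by blast
    have A: "A = insert \<theta>0 T'" "\<theta>0 \<notin> T'" unfolding T'_def using t0 by auto
    show ?case
    proof (cases "S s1 \<theta>0 \<inter> UU s1 T' = {}")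
      case True
      then show ?thesis using Good_insert_top[OF G True] A by simp
    next
      case False
      then obtain r0 where r0: "r0 \<in> S s1 \<theta>0" "r0 \<in> UU s1 T'" by blast
      have disj: "(S s1 \<theta>0 - {r0}) \<inter> UU s1 T' = {}" using lf r0 unfolding T'_def by blast
      obtain p1 where G1: "Good s1 T' p1" and ep: "\<forall>\<theta>\<in>T'. r0 \<in> S s1 \<theta> \<longrightarrow>
            (\<forall>a\<in>S s1 \<theta>. p1 a \<le> p1 r0) \<or> (\<forall>a\<in>S s1 \<theta>. p1 r0 \<le> p1 a)"
        using prep1[OF G A(2) r0(1) nft] by blast
      show ?thesis
      proof (cases "S s1 \<theta>0 \<subseteq> {r0}")
        case True
        have "\<forall>\<theta>\<in>T'. r0 \<in> S s1 \<theta> \<longrightarrow> (\<forall>a\<in>S s1 \<theta>. p1 a \<le> p1 r0) \<or> (S s1 \<theta>0 \<subseteq> {r0} \<and> (\<forall>a\<in>S s1 \<theta>. p1 r0 \<le> p1 a))"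
          using ep True by blast
        then show ?thesis using Good_insert_after[OF G1 r0 disj] A by simp
      next
        case False
        then obtain x where x: "x \<in> S s1 \<theta>0" "x \<noteq> r0" by blast
        then have "x \<notin> UU s1 T'" using disj by blast
        then obtain p2 where G2: "Good s1 T' p2" and st: "\<forall>\<theta>\<in>T'. r0 \<in> S s1 \<theta> \<longrightarrow> (\<forall>a\<in>S s1 \<theta>. p2 a \<le> p2 r0)"
          using prep2[OF G1 A(2) r0(1) x(1,2) _ ep nft] by blast
        have "\<forall>\<theta>\<in>T'. r0 \<in> S s1 \<theta> \<longrightarrow> (\<forall>a\<in>S s1 \<theta>. p2 a \<le> p2 r0) \<or> (S s1 \<theta>0 \<subseteq> {r0} \<and> (\<forall>a\<in>S s1 \<theta>. p2 r0 \<le> p2 a))"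
          using st by blast
        then show ?thesis using Good_insert_after[OF G2 r0 disj] A by simp
      qed
    qed
  qed
qed

lemma lin_lex:
  fixes k1 k2 t :: "'a \<Rightarrow> nat"
  assumes "inj t"
  shows "linear_order_on UNIV {(x,y). k1 x < k1 y \<or> (k1 x = k1 y \<and> (k2 x < k2 y \<or> (k2 x = k2 y \<and> t x \<le> t y)))}"
  unfolding linear_order_on_def partial_order_on_def preorder_on_def
proof (intro conjI)
  let ?R = "{(x,y). k1 x < k1 y \<or> (k1 x = k1 y \<and> (k2 x < k2 y \<or> (k2 x = k2 y \<and> t x \<le> t y)))}"
  show "?R \<subseteq> UNIV \<times> UNIV" by simp
  show "refl_on UNIV ?R" unfolding refl_on_def by simp
  show "trans ?R" unfolding trans_on_def by (simp, smt (verit) le_trans less_trans)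
  show "antisym ?R" unfolding antisym_on_def using assms by (auto simp: injD)
  show "total_on UNIV ?R" unfolding total_on_def by (simp, linarith)
qed

lemma good_mono:
  fixes s1 :: "'t::finite \<Rightarrow> 'r::finite pmf"
  assumes G: "Good s1 UNIV p"
  shows "\<exists>leT leR. linear_order_on UNIV leT \<and> linear_order_on UNIV leR \<and> monotone_wrt s1 leT leR"
proof -
  have ip: "inj p" and sp: "Sep s1 UNIV p" using G unfolding Good_def by auto
  obtain t :: "'t \<Rightarrow> nat" where t: "inj t" using inj_nat_ex by blast
  define k1 where "k1 \<theta> = Min (p ` S s1 \<theta>)" for \<theta>
  define k2 where "k2 \<theta> = Max (p ` S s1 \<theta>)" for \<theta>
  define leT where "leT = {(x,y). k1 x < k1 y \<or> (k1 x = k1 y \<and> (k2 x < k2 y \<or> (k2 x = k2 y \<and> t x \<le> t y)))}"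
  define leR where "leR = {(a,b). p a \<le> p b}"
  have fin: "\<And>\<theta>. finite (p ` S s1 \<theta>)" "\<And>\<theta>. p ` S s1 \<theta> \<noteq> {}" by (auto simp: set_pmf_not_empty)
  have b1: "\<And>\<theta> a. a \<in> S s1 \<theta> \<Longrightarrow> k1 \<theta> \<le> p a" unfolding k1_def using fin by simp
  have b2: "\<And>\<theta> a. a \<in> S s1 \<theta> \<Longrightarrow> p a \<le> k2 \<theta>" unfolding k2_def using fin by simp
  have i1: "\<And>\<theta>. \<exists>a\<in>S s1 \<theta>. p a = k1 \<theta>" unfolding k1_def using Min_in[OF fin] by (metis imageE)
  have i2: "\<And>\<theta>. \<exists>a\<in>S s1 \<theta>. p a = k2 \<theta>" unfolding k2_def using Max_in[OF fin] by (metis imageE)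
  have "monotone_wrt s1 leT leR" unfolding monotone_wrt_def leR_def
  proof (intro allI impI, elim conjE, simp)
    fix \<theta> \<theta>' r r' assume h: "(\<theta>', \<theta>) \<in> leT" "\<theta> \<noteq> \<theta>'" "r \<in> S s1 \<theta>" "r' \<in> S s1 \<theta>'"
    have "(\<forall>a\<in>S s1 \<theta>. \<forall>b\<in>S s1 \<theta>'. p a \<le> p b) \<or> (\<forall>a\<in>S s1 \<theta>. \<forall>b\<in>S s1 \<theta>'. p b \<le> p a)"
      using sp h(2) unfolding Sep_def by blast
    then show "p r' \<le> p r"
    proof
      assume A: "\<forall>a\<in>S s1 \<theta>. \<forall>b\<in>S s1 \<theta>'. p a \<le> p b"
      have "k2 \<theta> \<le> k1 \<theta>'" using A i1[of \<theta>'] i2[of \<theta>] by force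
      moreover have "k1 \<theta> \<le> k2 \<theta>" using b2 i1[of \<theta>] by force
      moreover have "k1 \<theta>' \<le> k2 \<theta>'" using b2 i1[of \<theta>'] by force
      moreover have "p r' \<le> k2 \<theta>'" "k1 \<theta> \<le> p r" using b1 b2 h by auto
      ultimately show ?thesis using h(1) unfolding leT_def by auto
    qed (use h in auto)
  qed
  moreover have "linear_order_on UNIV leT" unfolding leT_def by (rule lin_lex[OF t])
  moreover have "linear_order_on UNIV leR" unfolding leR_def by (rule lin_key[OF ip])
  ultimately show ?thesis by blast
qed


theorem proposition10:
  fixes s1 :: "'t::finite \<Rightarrow> 'r::finite pmf"
  shows "(\<exists>leT leR. linear_order_on UNIV leT \<and> linear_order_on UNIV leR \<and> monotone_wrt s1 leT leR)
         \<longleftrightarrow> (G_acyclic s1 \<and> \<not> has_forbidden_triple s1)"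
proof
  assume "\<exists>leT leR. linear_order_on UNIV leT \<and> linear_order_on UNIV leR \<and> monotone_wrt s1 leT leR"
  then obtain leT leR where h: "linear_order_on UNIV leT" "linear_order_on UNIV leR" "monotone_wrt s1 leT leR"
    by blast
  show "G_acyclic s1 \<and> \<not> has_forbidden_triple s1"
    using mono_acyclic[OF h] mono_no_ft[OF h] by blast
next
  assume "G_acyclic s1 \<and> \<not> has_forbidden_triple s1"
  then obtain p where "Good s1 UNIV p" using build by blast
  then show "\<exists>leT leR. linear_order_on UNIV leT \<and> linear_order_on UNIV leR \<and> monotone_wrt s1 leT leR"
    by (rule good_mono)
qed

end
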